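(* Let $X\subseteq\{0,1\}^n$ be a nonempty set, let $U\subseteq\mathbb{R}^{n+1}$ be a nonempty compact set, and define $f(x):=\max_{(c_0,c)\in U}\, c^\top x+c_0$ for $x\in\mathbb{R}^n$. Consider an iteration $k$ of Algorithm SD-DROP (described in the context) in which the algorithm does not terminate. Let $L$ be an affine subspace of $\mathbb{R}^n$ containing $x^k$ such that (i) the restriction $f|_L$ is differentiable at $x^k$, (ii) $\dim(L\cap\operatorname{aff}(V^{k+1}))\ge 1$, and (iii) $c^k$ is not orthogonal to $L\cap\operatorname{aff}(V^{k+1})$. Then $f(x^{k+1})<f(x^k)$.
   Context: For a convex function $f$, $\partial f(x)$ denotes its subdifferential at $x$. For a convex set $C$ and $x\in C$, $\mathcal{N}_C(x)=\{d\in\mathbb{R}^n: d^\top(y-x)\le 0\ \forall y\in C\}$ is the normal cone of $C$ at $x$; $\operatorname{aff}$ denotes affine hull. "$c^k$ not orthogonal to $L\cap\operatorname{aff}(V^{k+1})$" means $c^k$ is not orthogonal to the linear subspace parallel to this affine set. Algorithm SD-DROP: pick any $\hat x^0\in X$ and set $V^1=\{\hat x^0\}$. For $k=1,2,\dots$: compute $\alpha^k\in\mathbb{R}^{V^k}_+$ with $\sum_{v\in V^k}\alpha^k_v=1$, the point $x^k=\sum_{v\in V^k}\alpha^k_v v$, and a vector $c^k\in\partial f(x^k)\cap(-\mathcal{N}_{\operatorname{conv}(V^k)}(x^k))$ (so $x^k$ minimizes $f$ over $\operatorname{conv}(V^k)$); then compute a minimizer $\hat x^k$ of $\min_{x\in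 X}(c^k)^\top x$. If $(c^k)^\top\hat x^k\ge (c^k)^\top x^k$, stop and output $x^k$; otherwise set $V^{k+1}:=\{v\in V^k:\alpha^k_v>0\}\cup\{\hat x^k\}$ and continue. *)

theory Defs
  imports "HOL-Analysis.Analysis"
begin

text \<open>The objective f(x) = max over (c0,c) in U of c.x + c0; U is a set of pairs (c0, c)
  representing points of R^(n+1). For compact nonempty U the supremum is attained (a max).\<close>
definition sd_f :: "(real \<times> (real^'n)) set \<Rightarrow> real^'n \<Rightarrow> real" where
  "sd_f U x = (SUP p\<in>U. snd p \<bullet> x + fst p)"

definition subdiff :: "(real^'n \<Rightarrow> real) \<Rightarrow> real^'n \<Rightarrow> (real^'n) set" where
  "subdiff f x = {g. \<forall>y. f x + g \<bullet> (y - x) \<le> f y}"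

definition normal_cone :: "(real^'n) set \<Rightarrow> real^'n \<Rightarrow> (real^'n) set" where
  "normal_cone C x = {d. \<forall>y\<in>C. d \<bullet> (y - x) \<le> 0}"

end

theory Submission
  imports Defs
begin
lemma pick_yz:
  fixes L :: "(real^'n) set" and A :: "(real^'n) set" and c :: "real^'n"
  assumes nonorth: "\<exists>d \<in> {y - z | y z. y \<in> L \<inter> A
                                   \<and> z \<in> L \<inter> A}.
                    \<not> orthogonal c d"
  obtains y z where "y \<in> L" "y \<in> A" "z \<in> L" "z \<in> A" "\<not> orthogonal c (y - z)"
  using nonorth by auto

lemma descent_dir:
  fixes f :: "real^'n \<Rightarrow> real"
  assumes dif: "f differentiable (at x within L)"
    and line: "\<And>t. x + t *\<^sub>R d \<in> L"
    and sub: "\<And>t. f x + g \<bullet> (t *\<^sub>R d) \<le> f (x + t *\<^sub>R d)"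
    and neg: "g \<bullet> d < 0"
  shows "eventually (\<lambda>t. f (x + t *\<^sub>R d) < f x) (at_right 0)"
proof -
  obtain D where D: "(f has_derivative D) (at x within L)"
    using dif unfolding differentiable_def by blast
  define l where "l = (\<lambda>t::real. x + t *\<^sub>R d)"
  have l: "(l has_derivative (\<lambda>t. t *\<^sub>R d)) (at 0)"
    unfolding l_def by (auto intro!: derivative_eq_intros)
  have sub2: "l ` UNIV \<subseteq> L" using line l_def by auto
  have D2: "(f has_derivative D) (at (l 0) within (l ` UNIV))"
    using has_derivative_subset[OF D sub2] by (simp add: l_def)
  have "((f \<circ> l) has_derivative (D \<circ> (\<lambda>t. t *\<^sub>R d))) (at 0 within UNIV)"
    by (rule diff_chain_within[OF _ D2]) (use l in simp)
  moreover have lin: "linear D" using D has_derivative_linear by blast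
  moreover have "D \<circ> (\<lambda>t. t *\<^sub>R d) = (*) (D d)"
    using linear_scale[OF lin] by (auto simp: fun_eq_iff)
  ultimately have Dphi: "((f \<circ> l) has_real_derivative D d) (at 0)"
    unfolding has_field_derivative_def by simp
  have Dpsi: "((\<lambda>t. (f \<circ> l) t - t * (g \<bullet> d)) has_real_derivative (D d - g \<bullet> d)) (at 0)"
    by (intro DERIV_diff Dphi) (auto intro!: derivative_eq_intros)
  have "D d - g \<bullet> d = 0"
  proof (rule DERIV_local_min[OF Dpsi, of 1])
    show "\<forall>y. \<bar>0 - y\<bar> < 1 \<longrightarrow> (f \<circ> l) 0 - 0 * (g \<bullet> d) \<le> (f \<circ> l) y - y * (g \<bullet> d)"
    proof (intro allI impI)
      fix y :: real
      have "f x + g \<bullet> (y *\<^sub>R d) \<le> f (x + y *\<^sub>R d)" by (rule sub)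
      then show "(f \<circ> l) 0 - 0 * (g \<bullet> d) \<le> (f \<circ> l) y - y * (g \<bullet> d)"
        by (simp add: l_def)
    qed
  qed simp
  then have "D d < 0" using neg by simp
  from has_real_derivative_neg_dec_right[OF Dphi this]
  obtain e where e: "e > 0" "\<forall>h>0. h < e \<longrightarrow> (f \<circ> l) 0 > (f \<circ> l) (0 + h)"
    by blast
  then have e2: "\<forall>h>0. h < e \<longrightarrow> f x > f (x + h *\<^sub>R d)"
    by (simp add: l_def)
  show ?thesis unfolding eventually_at_right_field
    using e(1) e2 by blast
qed

lemma conv_dir:
  fixes T :: "'a::real_vector set"
  assumes fin: "finite T" and a0: "\<forall>v\<in>T. 0 \<le> a v" and a1: "sum a T = 1"
    and b0: "sum b T = 0" and ab: "\<forall>v\<in>T. a v = 0 \<longrightarrow> 0 \<le> b v"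
  shows "eventually (\<lambda>t. (\<Sum>v\<in>T. a v *\<^sub>R v) + t *\<^sub>R (\<Sum>v\<in>T. b v *\<^sub>R v) \<in> convex hull T) (at_right 0)"
proof -
  have "eventually (\<lambda>t. \<forall>v\<in>T. 0 \<le> a v + t * b v) (at_right (0::real))"
  proof (rule eventually_ball_finite[OF fin], intro ballI)
    fix v assume v: "v \<in> T"
    show "eventually (\<lambda>t. 0 \<le> a v + t * b v) (at_right (0::real))"
    proof (cases "a v = 0")
      case True
      then have "0 \<le> b v" using ab v by blast
      then have "\<forall>t>0. t < 1 \<longrightarrow> 0 \<le> a v + t * b v" using True by simp
      then show ?thesis unfolding eventually_at_right_field
        by (intro exI[of _ 1]) simp
    next
      case False
      then have pos: "a v > 0" using a0 v by force
      have "((\<lambda>t. a v + t * b v) \<longlongrightarrow> a v + 0 * b v) (at_right (0::real))"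
        by (intro tendsto_intros)
      then have "eventually (\<lambda>t. a v + t * b v > 0) (at_right (0::real))"
        using order_tendstoD(1)[of _ "a v" _ 0] pos by simp
      then show ?thesis by (rule eventually_mono) simp
    qed
  qed
  then show ?thesis
  proof (rule eventually_mono)
    fix t assume t: "\<forall>v\<in>T. 0 \<le> a v + t * b v"
    have "(\<Sum>v\<in>T. a v *\<^sub>R v) + t *\<^sub>R (\<Sum>v\<in>T. b v *\<^sub>R v) = (\<Sum>v\<in>T. (a v + t * b v) *\<^sub>R v)"
      by (simp only: scaleR_sum_right sum.distrib[symmetric] scaleR_add_left scaleR_scaleR)
    moreover have s1: "(\<Sum>v\<in>T. a v + t * b v) = 1"
    proof -
      have "(\<Sum>v\<in>T. a v + t * b v) = sum a T + t * sum b T"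
        by (simp only: sum.distrib sum_distrib_left)
      then show ?thesis using a1 b0 by simp
    qed
    ultimately show "(\<Sum>v\<in>T. a v *\<^sub>R v) + t *\<^sub>R (\<Sum>v\<in>T. b v *\<^sub>R v) \<in> convex hull T"
      unfolding convex_hull_finite[OF fin] mem_Collect_eq
      apply (intro exI[of _ "\<lambda>v. a v + t * b v"] conjI)
      using t s1 by simp_all
  qed
qed

theorem lemma3:
  fixes X :: "(real^'n) set"
    and U :: "(real \<times> (real^'n)) set"
    and V :: "nat \<Rightarrow> (real^'n) set"
    and \<alpha> :: "nat \<Rightarrow> real^'n \<Rightarrow> real"
    and x c xh :: "nat \<Rightarrow> real^'n"
    and L :: "(real^'n) set"
    and k :: nat
  assumes X_ne: "X \<noteq> {}"
    and X_01: "X \<subseteq> {v. \<forall>i. v $ i = 0 \<or> v $ i = 1}"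
    and U_cpt: "compact U" and U_ne: "U \<noteq> {}"
    and k_pos: "1 \<le> k"
    and init: "xh 0 \<in> X" "V 1 = {xh 0}"
    and weights: "\<And>j. 1 \<le> j \<Longrightarrow> j \<le> Suc k \<Longrightarrow>
        (\<forall>v\<in>V j. 0 \<le> \<alpha> j v) \<and> (\<Sum>v\<in>V j. \<alpha> j v) = 1
        \<and> x j = (\<Sum>v\<in>V j. \<alpha> j v *\<^sub>R v)
        \<and> c j \<in> subdiff (sd_f U) (x j) \<inter> uminus ` normal_cone (convex hull (V j)) (x j)"
    and lmo: "\<And>j. 1 \<le> j \<Longrightarrow> j \<le> k \<Longrightarrow>
        xh j \<in> X \<and> (\<forall>y\<in>X. c j \<bullet> xh j \<le> c j \<bullet> y)"
    and no_stop: "\<And>j. 1 \<le> j \<Longrightarrow> j \<le> k \<Longrightarrow> c j \<bullet> xh j < c j \<bullet> x j"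
    and update: "\<And>j. 1 \<le> j \<Longrightarrow> j \<le> k \<Longrightarrow>
        V (Suc j) = {v \<in> V j. 0 < \<alpha> j v} \<union> {xh j}"
    and L_aff: "affine L" and xk_L: "x k \<in> L"
    and diff: "sd_f U differentiable (at (x k) within L)"
    and dim: "aff_dim (L \<inter> affine hull (V (Suc k))) \<ge> 1"
    and nonorth: "\<exists>d \<in> {y - z | y z. y \<in> L \<inter> affine hull (V (Suc k))
                                   \<and> z \<in> L \<inter> affine hull (V (Suc k))}.
                    \<not> orthogonal (c k) d"
  shows "sd_f U (x (Suc k)) < sd_f U (x k)"
proof -
  let ?f = "sd_f U"
  define S where "S = {v \<in> V k. 0 < \<alpha> k v}"
  define T where "T = V (Suc k)"
  have wk: "(\<forall>v\<in>V k. 0 \<le> \<alpha> k v) \<and> (\<Sum>v\<in>V k. \<alpha> k v) = 1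
        \<and> x k = (\<Sum>v\<in>V k. \<alpha> k v *\<^sub>R v)
        \<and> c k \<in> subdiff ?f (x k) \<inter> uminus ` normal_cone (convex hull (V k)) (x k)"
    using weights[OF k_pos le_SucI[OF order_refl]] .
  have wk1: "c (Suc k) \<in> subdiff ?f (x (Suc k)) \<inter> uminus ` normal_cone (convex hull T) (x (Suc k))"
    unfolding T_def using conjunct2[OF conjunct2[OF conjunct2[OF weights[of "Suc k", OF _ order_refl]]]]
    by simp
  have finVk: "finite (V k)"
  proof (rule ccontr)
    assume "infinite (V k)"
    then have "sum (\<alpha> k) (V k) = 0" by simp
    with wk show False by simp
  qed
  have finS: "finite S" using finVk S_def by simp
  have SV: "S \<subseteq> V k" using S_def by auto
  have Tdef: "T = insert (xh k) S" using update[of k] k_pos S_def T_def by auto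
  have finT: "finite T" using Tdef finS by simp
  have zero_out: "\<forall>v \<in> V k - S. \<alpha> k v = 0" using wk S_def by force
  have xkS: "x k = (\<Sum>v\<in>S. \<alpha> k v *\<^sub>R v)"
  proof -
    have "(\<Sum>v\<in>V k. \<alpha> k v *\<^sub>R v) = (\<Sum>v\<in>S. \<alpha> k v *\<^sub>R v)"
      by (rule sum.mono_neutral_right[OF finVk SV]) (use zero_out in simp)
    then show ?thesis using wk by simp
  qed
  have sumS: "(\<Sum>v\<in>S. \<alpha> k v) = 1"
  proof -
    have "(\<Sum>v\<in>V k. \<alpha> k v) = (\<Sum>v\<in>S. \<alpha> k v)"
      by (rule sum.mono_neutral_right[OF finVk SV]) (use zero_out in simp)
    then show ?thesis using wk by simp
  qed
  obtain n where n: "n \<in> normal_cone (convex hull V k) (x k)" "c k = - n" using wk by auto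
  have cge: "c k \<bullet> v - c k \<bullet> x k \<ge> 0" if v: "v \<in> V k" for v
  proof -
    have "v \<in> convex hull V k" using v by (rule hull_inc)
    then have "n \<bullet> (v - x k) \<le> 0" using n(1) unfolding normal_cone_def by blast
    then show ?thesis using n(2) by (simp add: inner_diff_right)
  qed
  have cperp: "c k \<bullet> v = c k \<bullet> x k" if v: "v \<in> S" for v
  proof -
    have "(\<Sum>v\<in>S. \<alpha> k v * (c k \<bullet> v - c k \<bullet> x k))
        = (\<Sum>v\<in>S. \<alpha> k v * (c k \<bullet> v)) - (\<Sum>v\<in>S. \<alpha> k v) * (c k \<bullet> x k)"
      by (simp add: right_diff_distrib sum_subtractf sum_distrib_right)
    also have "(\<Sum>v\<in>S. \<alpha> k v * (c k \<bullet> v)) = c k \<bullet> (\<Sum>v\<in>S. \<alpha> k v *\<^sub>R v)"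
      by (simp add: inner_sum_right)
    also have "\<dots> = c k \<bullet> x k" using xkS by simp
    finally have s0: "(\<Sum>v\<in>S. \<alpha> k v * (c k \<bullet> v - c k \<bullet> x k)) = 0" using sumS by simp
    moreover have nn: "0 \<le> \<alpha> k w * (c k \<bullet> w - c k \<bullet> x k)" if w: "w \<in> S" for w
    proof -
      have "0 < \<alpha> k w" "w \<in> V k" using w unfolding S_def by simp_all
      then show ?thesis using cge[of w] by simp
    qed
    have iff: "(\<Sum>v\<in>S. \<alpha> k v * (c k \<bullet> v - c k \<bullet> x k)) = 0
        \<longleftrightarrow> (\<forall>v\<in>S. \<alpha> k v * (c k \<bullet> v - c k \<bullet> x k) = 0)"
      by (rule sum_nonneg_eq_0_iff[OF finS]) (rule nn)
    have "\<forall>v\<in>S. \<alpha> k v * (c k \<bullet> v - c k \<bullet> x k) = 0"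
      using iffD1[OF iff s0] .
    then have "\<alpha> k v * (c k \<bullet> v - c k \<bullet> x k) = 0" using v by blast
    moreover have "0 < \<alpha> k v" using v unfolding S_def by simp
    ultimately show ?thesis by simp
  qed
  obtain y z where yz: "y \<in> L" "y \<in> affine hull T" "z \<in> L" "z \<in> affine hull T"
    "\<not> orthogonal (c k) (y - z)"
    using pick_yz[OF nonorth] unfolding T_def .
  obtain \<mu> where mu: "sum \<mu> T = 1" "(\<Sum>v\<in>T. \<mu> v *\<^sub>R v) = y"
  proof -
    from yz(2) have "\<exists>u. sum u T = 1 \<and> (\<Sum>v\<in>T. u v *\<^sub>R v) = y"
      unfolding affine_hull_finite[OF finT] by simp
    then show ?thesis by (elim exE conjE) (rule that; assumption)
  qed
  obtain \<nu> where nu: "sum \<nu> T = 1" "(\<Sum>v\<in>T. \<nu> v *\<^sub>R v) = z"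
  proof -
    from yz(4) have "\<exists>u. sum u T = 1 \<and> (\<Sum>v\<in>T. u v *\<^sub>R v) = z"
      unfolding affine_hull_finite[OF finT] by simp
    then show ?thesis by (elim exE conjE) (rule that; assumption)
  qed
  define b where "b v = \<mu> v - \<nu> v" for v
  have b0: "sum b T = 0" using mu nu by (simp add: b_def sum_subtractf)
  have bd: "y - z = (\<Sum>v\<in>T. b v *\<^sub>R v)"
    using mu nu by (simp add: b_def scaleR_diff_left sum_subtractf)
  have cd: "c k \<bullet> (y - z) = (\<Sum>v\<in>T. b v * (c k \<bullet> v - c k \<bullet> x k))"
  proof -
    have "(\<Sum>v\<in>T. b v * (c k \<bullet> v - c k \<bullet> x k))
        = (\<Sum>v\<in>T. b v * (c k \<bullet> v)) - (\<Sum>v\<in>T. b v) * (c k \<bullet> x k)"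
      by (simp add: right_diff_distrib sum_subtractf sum_distrib_right)
    also have "(\<Sum>v\<in>T. b v * (c k \<bullet> v)) = c k \<bullet> (\<Sum>v\<in>T. b v *\<^sub>R v)"
      by (simp add: inner_sum_right)
    finally show ?thesis using b0 bd by simp
  qed
  have cd_ne: "c k \<bullet> (y - z) \<noteq> 0" using yz(5) by (simp add: orthogonal_def)
  have Szero: "(\<Sum>v\<in>S. b v * (c k \<bullet> v - c k \<bullet> x k)) = 0"
    using cperp by simp
  have xhS: "xh k \<notin> S"
  proof
    assume "xh k \<in> S"
    then have "T = S" using Tdef by auto
    then show False using cd cd_ne Szero by simp
  qed
  have cd2: "c k \<bullet> (y - z) = b (xh k) * (c k \<bullet> xh k - c k \<bullet> x k)"
    using cd Szero Tdef xhS finS by simp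
  have gap: "c k \<bullet> xh k < c k \<bullet> x k" using no_stop[of k] k_pos by simp
  have bxh: "b (xh k) \<noteq> 0" using cd2 cd_ne by auto
  define s where "s = sgn (b (xh k))"
  have sb: "s * b (xh k) > 0" using bxh by (simp add: s_def sgn_real_def)
  define b' where "b' v = s * b v" for v
  define d where "d = s *\<^sub>R (y - z)"
  have b'0: "sum b' T = 0" using b0 by (simp add: b'_def sum_distrib_left[symmetric])
  have b'd: "d = (\<Sum>v\<in>T. b' v *\<^sub>R v)"
    using bd by (simp add: d_def b'_def scaleR_sum_right)
  have cdneg: "c k \<bullet> d < 0"
  proof -
    have "c k \<bullet> d = (s * b (xh k)) * (c k \<bullet> xh k - c k \<bullet> x k)"
      using cd2 by (simp add: d_def)
    moreover have "(s * b (xh k)) * (c k \<bullet> xh k - c k \<bullet> x k) < 0"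
      using sb gap by (simp add: mult_pos_neg)
    ultimately show ?thesis by simp
  qed
  define a where "a v = (if v \<in> S then \<alpha> k v else 0)" for v
  have a1: "sum a T = 1"
  proof -
    have "sum a T = a (xh k) + sum a S" using Tdef xhS finS by simp
    also have "sum a S = (\<Sum>v\<in>S. \<alpha> k v)" by (rule sum.cong) (simp_all add: a_def)
    finally show ?thesis using sumS xhS by (simp add: a_def)
  qed
  have ax: "(\<Sum>v\<in>T. a v *\<^sub>R v) = x k"
  proof -
    have "(\<Sum>v\<in>T. a v *\<^sub>R v) = a (xh k) *\<^sub>R xh k + (\<Sum>v\<in>S. a v *\<^sub>R v)"
      using Tdef xhS finS by simp
    also have "(\<Sum>v\<in>S. a v *\<^sub>R v) = (\<Sum>v\<in>S. \<alpha> k v *\<^sub>R v)"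
      by (rule sum.cong) (simp_all add: a_def)
    finally show ?thesis using xkS xhS by (simp add: a_def)
  qed
  have a0: "\<forall>v\<in>T. 0 \<le> a v" using S_def by (auto simp: a_def)
  have ab: "\<forall>v\<in>T. a v = 0 \<longrightarrow> 0 \<le> b' v"
  proof (intro ballI impI)
    fix v assume v: "v \<in> T" and av: "a v = 0"
    have "v \<notin> S" using av S_def by (auto simp: a_def)
    then have "v = xh k" using v Tdef by auto
    then show "0 \<le> b' v" using sb by (simp add: b'_def)
  qed
  have ev1: "eventually (\<lambda>t. x k + t *\<^sub>R d \<in> convex hull T) (at_right 0)"
    using conv_dir[OF finT a0 a1 b'0 ab] by (simp add: ax b'd)
  have line: "x k + t *\<^sub>R d \<in> L" for t
  proof -
    have "x k + (t * s) *\<^sub>R (y - z) \<in> L"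
      by (rule mem_affine_3_minus[OF L_aff xk_L yz(1) yz(3)])
    then show ?thesis by (simp add: d_def)
  qed
  have csub: "c k \<in> subdiff ?f (x k)"
    using IntD1[OF conjunct2[OF conjunct2[OF conjunct2[OF wk]]]] .
  have sub: "?f (x k) + c k \<bullet> (t *\<^sub>R d) \<le> ?f (x k + t *\<^sub>R d)" for t
  proof -
    have "\<forall>y. ?f (x k) + c k \<bullet> (y - x k) \<le> ?f y" using csub unfolding subdiff_def by simp
    then have "?f (x k) + c k \<bullet> ((x k + t *\<^sub>R d) - x k) \<le> ?f (x k + t *\<^sub>R d)" by (rule spec)
    then show ?thesis by simp
  qed
  have ev2: "eventually (\<lambda>t. ?f (x k + t *\<^sub>R d) < ?f (x k)) (at_right 0)"
    by (rule descent_dir[OF diff line sub cdneg])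
  have "\<exists>t. x k + t *\<^sub>R d \<in> convex hull T \<and> ?f (x k + t *\<^sub>R d) < ?f (x k)"
    using eventually_happens'[OF _ eventually_conj[OF ev1 ev2]] by simp
  then obtain p where p: "p \<in> convex hull T" "?f p < ?f (x k)" by blast
  obtain n' where n': "n' \<in> normal_cone (convex hull T) (x (Suc k))" "c (Suc k) = - n'"
    using wk1 by auto
  have "n' \<bullet> (p - x (Suc k)) \<le> 0" using n'(1) p(1) unfolding normal_cone_def by blast
  moreover have "?f (x (Suc k)) + c (Suc k) \<bullet> (p - x (Suc k)) \<le> ?f p"
    using wk1 unfolding subdiff_def by blast
  ultimately have "?f (x (Suc k)) \<le> ?f p" using n'(2) by simp
  then show ?thesis using p(2) by simp
qed

end
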